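(* For a graph $G$, $\gamma_{(2,2,2)}(G)=3$ if and only if $\gamma_{\times2,t}(G)=3$.
   Context: All graphs are finite and simple; $N(v)$ is the open neighbourhood. $\gamma_{(2,2,2)}(G)$ is the minimum of $\sum_v f(v)$ over functions $f:V(G)\to\{0,1,2\}$ with $\sum_{u\in N(v)}f(u)\ge2$ for every vertex $v$ (defined when such $f$ exists, i.e., when $G$ has no isolated vertex). $\gamma_{\times2,t}(G)$ is the minimum size of $S\subseteq V(G)$ such that every vertex has at least two neighbours in $S$ (defined when $G$ has minimum degree at least $2$). *)

theory Defs
  imports Main "HOL-Library.Extended_Nat"
begin

definition simple_graph :: "'a set \<Rightarrow> ('a \<Rightarrow> 'a \<Rightarrow> bool) \<Rightarrow> bool" where
  "simple_graph V E \<longleftrightarrow> finite V \<and> (\<forall>u v. E u v \<longrightarrow> E v u) \<and> (\<forall>v. \<not> E v v)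
     \<and> (\<forall>u v. E u v \<longrightarrow> u \<in> V \<and> v \<in> V)"

definition nbhd :: "'a set \<Rightarrow> ('a \<Rightarrow> 'a \<Rightarrow> bool) \<Rightarrow> 'a \<Rightarrow> 'a set" where
  "nbhd V E v = {u \<in> V. E v u}"

text \<open>(2,2,2)-domination number; the infimum of the empty set is \<infinity>
  (the undefined case, i.e. graphs with an isolated vertex).\<close>
definition gamma_222 :: "'a set \<Rightarrow> ('a \<Rightarrow> 'a \<Rightarrow> bool) \<Rightarrow> enat" where
  "gamma_222 V E = Inf {enat (\<Sum>v\<in>V. f v) | f :: 'a \<Rightarrow> nat.
      (\<forall>v\<in>V. f v \<in> {0, 1, 2}) \<and> (\<forall>v\<in>V. (\<Sum>u\<in>nbhd V E v. f u) \<ge> 2)}"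

text \<open>Double total domination number; \<infinity> when undefined (minimum degree < 2).\<close>
definition gamma_x2t :: "'a set \<Rightarrow> ('a \<Rightarrow> 'a \<Rightarrow> bool) \<Rightarrow> enat" where
  "gamma_x2t V E = Inf {enat (card S) | S. S \<subseteq> V \<and> (\<forall>v\<in>V. card (nbhd V E v \<inter> S) \<ge> 2)}"

end

theory Submission
  imports Defs
begin

lemma inf3: "Inf X = (3::enat) \<longleftrightarrow> 3 \<in> X \<and> (\<forall>x\<in>X. 3 \<le> x)"
proof
  assume h: "Inf X = 3"
  hence "X \<noteq> {}" by (auto simp: Inf_enat_def)
  hence "Inf X \<in> X" by (auto simp: Inf_enat_def intro: LeastI)
  with h show "3 \<in> X \<and> (\<forall>x\<in>X. 3 \<le> x)" by (metis Inf_lower)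
next
  assume "3 \<in> X \<and> (\<forall>x\<in>X. 3 \<le> x)"
  thus "Inf X = 3" by (meson Inf_greatest Inf_lower order_antisym)
qed

lemma key:
  assumes g: "simple_graph V E" and ne: "v \<in> V"
    and f: "\<forall>v\<in>V. (\<Sum>u\<in>nbhd V E v. f u) \<ge> (2::nat)"
  shows "(\<Sum>v\<in>V. f v) \<ge> 3"
proof -
  have fin: "finite V" using g by (simp add: simple_graph_def)
  have sub: "\<And>w. nbhd V E w \<subseteq> V - {w}" using g by (auto simp: simple_graph_def nbhd_def)
  have "(\<Sum>u\<in>nbhd V E v. f u) \<ge> 2" using f ne by auto
  then obtain u where u: "u \<in> nbhd V E v" "f u > 0"
    by (metis (no_types, lifting) gr0I not_numeral_le_zero sum.neutral)
  have uV: "u \<in> V" using u sub by auto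
  have "(\<Sum>v\<in>V. f v) = f u + (\<Sum>v\<in>V-{u}. f v)" using fin uV by (simp add: sum.remove)
  moreover have "(\<Sum>v\<in>V-{u}. f v) \<ge> (\<Sum>v\<in>nbhd V E u. f v)"
    using sub fin by (intro sum_mono2) auto
  moreover have "(\<Sum>v\<in>nbhd V E u. f v) \<ge> 2" using f uV by auto
  ultimately show ?thesis using u by linarith
qed

theorem theorem17:
  fixes V :: "'a set" and E :: "'a \<Rightarrow> 'a \<Rightarrow> bool"
  assumes "simple_graph V E"
  shows "gamma_222 V E = 3 \<longleftrightarrow> gamma_x2t V E = 3"
proof -
  define A where "A = {enat (\<Sum>v\<in>V. f v) | f :: 'a \<Rightarrow> nat.
      (\<forall>v\<in>V. f v \<in> {0, 1, 2}) \<and> (\<forall>v\<in>V. (\<Sum>u\<in>nbhd V E v. f u) \<ge> 2)}"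
  define B where "B = {enat (card S) | S. S \<subseteq> V \<and> (\<forall>v\<in>V. card (nbhd V E v \<inter> S) \<ge> 2)}"
  have fin: "finite V" using assms by (simp add: simple_graph_def)
  have nsub: "\<And>w. nbhd V E w \<subseteq> V - {w}" using assms by (auto simp: simple_graph_def nbhd_def)
  have gA: "gamma_222 V E = Inf A" by (simp add: gamma_222_def A_def)
  have gB: "gamma_x2t V E = Inf B" by (simp add: gamma_x2t_def B_def)
  show ?thesis
  proof (cases "V = {}")
    case True
    have "0 \<in> A" unfolding A_def using True by (auto simp: zero_enat_def)
    moreover have "0 \<in> B" unfolding B_def using True by (auto simp: zero_enat_def)
    ultimately have "Inf A \<le> 0" "Inf B \<le> 0" by (blast intro: Inf_lower)+
    hence "Inf A = 0" "Inf B = 0" by (simp only: le_zero_eq)+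
    thus ?thesis unfolding gA gB by simp
  next
    case False
    then obtain v0 where v0: "v0 \<in> V" by auto
    have A3: "\<forall>x\<in>A. 3 \<le> x"
    proof
      fix x assume "x \<in> A"
      then obtain f where "x = enat (\<Sum>v\<in>V. f v)" "\<forall>v\<in>V. (\<Sum>u\<in>nbhd V E v. f u) \<ge> (2::nat)"
        unfolding A_def by auto
      with key[OF assms v0] show "3 \<le> x" by (simp add: numeral_eq_enat)
    qed
    have BA: "B \<subseteq> A"
    proof
      fix x assume "x \<in> B"
      then obtain S where S: "x = enat (card S)" "S \<subseteq> V" "\<forall>v\<in>V. card (nbhd V E v \<inter> S) \<ge> 2"
        unfolding B_def by auto
      define f where "f = (\<lambda>v. if v \<in> S then 1 else (0::nat))"
      have finS: "finite S" using S(2) fin finite_subset by auto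
      have c: "\<And>T. finite T \<Longrightarrow> (\<Sum>u\<in>T. f u) = card (T \<inter> S)"
        unfolding f_def by (simp add: sum.If_cases)
      have nfin: "\<And>w. finite (nbhd V E w)" using nsub fin finite_subset by blast
      have "(\<Sum>v\<in>V. f v) = card S" using c[OF fin] S(2) by (simp add: Int_absorb1)
      moreover have "\<forall>v\<in>V. (\<Sum>u\<in>nbhd V E v. f u) \<ge> 2" using c[OF nfin] S(3) by simp
      moreover have "\<forall>v\<in>V. f v \<in> {0, 1, 2}" unfolding f_def by auto
      ultimately show "x \<in> A" unfolding A_def S(1) mem_Collect_eq
        by (intro exI[of _ f] conjI) simp_all
    qed
    have AB: "3 \<in> A \<Longrightarrow> 3 \<in> B"
    proof -
      assume "3 \<in> A"
      then obtain f where f: "enat (\<Sum>v\<in>V. f v) = 3" "\<forall>v\<in>V. f v \<in> {0, 1, 2}"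
          "\<forall>v\<in>V. (\<Sum>u\<in>nbhd V E v. f u) \<ge> (2::nat)"
        unfolding A_def by auto
      have s3: "(\<Sum>v\<in>V. f v) = 3" using f(1) by (simp add: numeral_eq_enat)
      have f01: "\<forall>v\<in>V. f v \<in> {0, 1}"
      proof (rule ccontr)
        assume "\<not> ?thesis"
        then obtain u where u: "u \<in> V" "f u = 2" using f(2) by auto
        have "(\<Sum>v\<in>V. f v) = f u + (\<Sum>v\<in>V-{u}. f v)" using fin u by (simp add: sum.remove)
        moreover have "(\<Sum>v\<in>V-{u}. f v) \<ge> (\<Sum>v\<in>nbhd V E u. f v)"
          using nsub fin by (intro sum_mono2) auto
        moreover have "(\<Sum>v\<in>nbhd V E u. f v) \<ge> 2" using f(3) u by auto
        ultimately show False using u s3 by linarith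
      qed
      define S where "S = {v\<in>V. f v = 1}"
      have nfin: "\<And>w. finite (nbhd V E w)" using nsub fin finite_subset by blast
      have c: "\<And>T. finite T \<Longrightarrow> T \<subseteq> V \<Longrightarrow> (\<Sum>u\<in>T. f u) = card (T \<inter> S)"
      proof -
        fix T assume T: "finite T" "T \<subseteq> V"
        have "(\<Sum>u\<in>T. f u) = (\<Sum>u\<in>T. if u \<in> S then 1 else 0)"
          using T f01 unfolding S_def by (intro sum.cong) auto
        thus "(\<Sum>u\<in>T. f u) = card (T \<inter> S)" using T by (simp add: sum.If_cases)
      qed
      have "card S = 3" using c[OF fin] s3 unfolding S_def by (simp add: Int_absorb1)
      moreover have "\<forall>v\<in>V. card (nbhd V E v \<inter> S) \<ge> 2" using c[OF nfin] nsub f(3) by (metis Diff_subset subset_trans)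
      moreover have "S \<subseteq> V" unfolding S_def by auto
      ultimately show "3 \<in> B" unfolding B_def mem_Collect_eq
        by (intro exI[of _ S] conjI) (simp_all add: numeral_eq_enat)
    qed
    have "3 \<in> A \<longleftrightarrow> 3 \<in> B" using BA AB by blast
    moreover have "\<forall>x\<in>B. 3 \<le> x" using A3 BA by blast
    ultimately show ?thesis unfolding gA gB inf3 using A3 by simp
  qed
qed

end
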